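(* For the Curie–Weiss model and every $0\le\beta<1$, $$\log Z_N(\beta)=N\log 2+G_N(\beta),$$ where $G_N(\beta)$ is nondecreasing in $N$ and $$\lim_{N\to\infty}G_N(\beta)=\sum_{k\ge 2}\frac{\beta^k}{2k}=-\frac{\beta}{2}-\log\sqrt{1-\beta}.$$
   Context: Curie–Weiss model: for $\sigma\in\{-1,1\}^N$, $\mathcal H_N(\sigma)=-\frac1N\sum_{1\le i<j\le N}\sigma_i\sigma_j=-\frac{1}{2N}\mathcal M_N(\sigma)^2+\frac12$, where $\mathcal M_N(\sigma)=\sum_{i=1}^N\sigma_i$. The partition function is $Z_N(\beta)=\sum_{\sigma\in\{-1,1\}^N}e^{-\beta\mathcal H_N(\sigma)}$, and $G_N(\beta):=\log Z_N(\beta)-N\log 2$. *)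

theory Defs
  imports "HOL-Analysis.Analysis"
begin

definition configs :: "nat \<Rightarrow> (nat \<Rightarrow> real) set" where
  "configs N = ({1..N} \<rightarrow>\<^sub>E {-1, 1})"

definition cw_H :: "nat \<Rightarrow> (nat \<Rightarrow> real) \<Rightarrow> real" where
  "cw_H N \<sigma> = - (1 / real N) * (\<Sum>(i,j)\<in>{(i,j). 1 \<le> i \<and> i < j \<and> j \<le> N}. \<sigma> i * \<sigma> j)"

definition cw_Z :: "nat \<Rightarrow> real \<Rightarrow> real" where
  "cw_Z N \<beta> = (\<Sum>\<sigma>\<in>configs N. exp (- \<beta> * cw_H N \<sigma>))"

definition cw_G :: "nat \<Rightarrow> real \<Rightarrow> real" where
  "cw_G N \<beta> = ln (cw_Z N \<beta>) - real N * ln 2"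

end

theory Submission
  imports Defs "HOL-Probability.Distributions" "HOL-Real_Asymp.Real_Asymp"
begin

lemma sinh_ge_self: "0 \<le> (x::real) \<Longrightarrow> x \<le> sinh x"
  using real_le_x_sinh[of x] by (simp add: sinh_def exp_minus)

lemma k_nonneg:
  fixes t :: real assumes "0 \<le> t"
  shows "t * sinh t / cosh t \<le> 2 * ln (cosh t)"
proof -
  let ?f = "\<lambda>x::real. 2 * ln (cosh x) - x * sinh x / cosh x"
  have "?f 0 \<le> ?f t"
  proof (rule DERIV_nonneg_imp_nondecreasing[OF assms])
    fix x :: real assume x: "0 \<le> x" "x \<le> t"
    have d: "(?f has_real_derivative (2 * (sinh x / cosh x) - ((1 * sinh x + x * cosh x) * cosh x - x * sinh x * sinh x) / (cosh x)^2)) (at x)"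
      by (auto intro!: derivative_eq_intros simp: power2_eq_square field_simps)
    have e: "2 * (sinh x / cosh x) - ((1 * sinh x + x * cosh x) * cosh x - x * sinh x * sinh x) / (cosh x)^2
       = (sinh x * cosh x - x) / (cosh x)^2"
    proof -
      have p: "cosh x * cosh x - sinh x * sinh x = 1" using hyperbolic_pythagoras[of x] by (simp add: power2_eq_square)
      have "2 * (sinh x / cosh x) - ((1 * sinh x + x * cosh x) * cosh x - x * sinh x * sinh x) / (cosh x)^2
        = (sinh x * cosh x - x * (cosh x * cosh x - sinh x * sinh x)) / (cosh x)^2"
        by (simp add: field_simps power2_eq_square)
      then show ?thesis using p by simp
    qed
    have "x * 1 \<le> sinh x * cosh x"
      using sinh_ge_self[OF x(1)] cosh_real_ge_1[of x] x(1)
      by (intro mult_mono) auto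
    then have "0 \<le> (sinh x * cosh x - x) / (cosh x)^2" by simp
    with d e show "\<exists>y. (?f has_real_derivative y) (at x) \<and> 0 \<le> y" by auto
  qed
  then show ?thesis by simp
qed

definition hh :: "real \<Rightarrow> real" where "hh t = ln (cosh t) / t^2"

lemma hh_antimono:
  assumes "0 < a" "a \<le> b" shows "hh b \<le> hh a"
proof -
  have "- hh a \<le> - hh b"
  proof (rule DERIV_nonneg_imp_nondecreasing[OF assms(2)])
    fix x :: real assume x: "a \<le> x" "x \<le> b"
    hence xp: "0 < x" using assms by auto
    have d: "((\<lambda>x. - hh x) has_real_derivative - ((sinh x / cosh x * x^2 - ln (cosh x) * (2 * x)) / (x^2)^2)) (at x)"
      unfolding hh_def using xp
      by (auto intro!: derivative_eq_intros simp: power2_eq_square)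
    have "x * (x * sinh x / cosh x) \<le> x * (2 * ln (cosh x))"
      using k_nonneg[of x] xp by (intro mult_left_mono) auto
    hence "sinh x / cosh x * x^2 - ln (cosh x) * (2 * x) \<le> 0"
      by (simp add: power2_eq_square algebra_simps)
    hence "((sinh x / cosh x * x^2 - ln (cosh x) * (2 * x)) / (x^2)^2) \<le> 0"
      using xp by (intro divide_nonpos_pos) auto
    hence "0 \<le> - ((sinh x / cosh x * x^2 - ln (cosh x) * (2 * x)) / (x^2)^2)"
      by linarith
    with d show "\<exists>y. ((\<lambda>x. - hh x) has_real_derivative y) (at x) \<and> 0 \<le> y" by blast
  qed
  thus ?thesis by simp
qed

lemma hh_lim: "(hh \<longlongrightarrow> 1/2) (at_right 0)"
  unfolding hh_def cosh_field_def by real_asymp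

lemma hh_le: assumes "0 < x" shows "hh x \<le> 1/2"
proof (rule tendsto_le[OF _ hh_lim tendsto_const])
  show "at_right (0::real) \<noteq> bot" by simp
  have "eventually (\<lambda>y. 0 < y \<and> y < x) (at_right (0::real))"
    using eventually_at_right_real[OF assms] by (simp add: eventually_at_right)
  then show "eventually (\<lambda>y. hh x \<le> hh y) (at_right (0::real))"
    by eventually_elim (auto intro: hh_antimono)
qed

definition qq :: "nat \<Rightarrow> real \<Rightarrow> real" where "qq n t = real n * ln (cosh (t / sqrt (real n)))"

lemma qq_hh: assumes "t \<noteq> 0" "n \<ge> 1" shows "qq n t = t^2 * hh (\<bar>t\<bar> / sqrt (real n))"
proof -
  have "cosh (t / sqrt (real n)) = cosh (\<bar>t\<bar> / sqrt (real n))"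
    by (metis cosh_real_abs abs_divide real_sqrt_abs2 abs_of_nonneg real_sqrt_ge_zero of_nat_0_le_iff)
  then show ?thesis using assms unfolding qq_def hh_def
    by (simp add: power_divide field_simps)
qed

lemma qq_mono: assumes "n \<ge> 1" shows "qq n t \<le> qq (Suc n) t"
proof (cases "t = 0")
  case True then show ?thesis by (simp add: qq_def)
next
  case False
  have "hh (\<bar>t\<bar> / sqrt (real n)) \<le> hh (\<bar>t\<bar> / sqrt (real (Suc n)))"
    using False assms by (intro hh_antimono divide_left_mono) auto
  then show ?thesis using qq_hh[OF False assms] qq_hh[OF False, of "Suc n"] assms
    by (simp add: mult_left_mono)
qed

lemma qq_le: assumes "n \<ge> 1" shows "qq n t \<le> t^2 / 2"
proof (cases "t = 0")
  case True then show ?thesis by (simp add: qq_def)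
next
  case False
  have "hh (\<bar>t\<bar> / sqrt (real n)) \<le> 1/2"
    using False assms by (intro hh_le) auto
  then have "t^2 * hh (\<bar>t\<bar> / sqrt (real n)) \<le> t^2 * (1/2)"
    by (intro mult_left_mono) auto
  then show ?thesis using qq_hh[OF False assms] by simp
qed

lemma qq_lim: "(\<lambda>n. qq n t) \<longlonglongrightarrow> t^2 / 2"
proof (cases "t = 0")
  case True then show ?thesis by (simp add: qq_def)
next
  case False
  have u: "\<bar>t\<bar> > 0" using False by simp
  have f: "filterlim (\<lambda>n. \<bar>t\<bar> / sqrt (real n)) (at_right 0) sequentially"
    using u by real_asymp
  have "(\<lambda>n. hh (\<bar>t\<bar> / sqrt (real n))) \<longlonglongrightarrow> 1/2"
    using filterlim_compose[OF hh_lim f] .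
  then have "(\<lambda>n. t^2 * hh (\<bar>t\<bar> / sqrt (real n))) \<longlonglongrightarrow> t^2 * (1/2)"
    by (intro tendsto_intros)
  moreover have "eventually (\<lambda>n. t^2 * hh (\<bar>t\<bar> / sqrt (real n)) = qq n t) sequentially"
    using eventually_ge_at_top[of 1] by eventually_elim (simp add: qq_hh[OF False])
  ultimately show ?thesis using Lim_transform_eventually by fastforce
qed

lemma gauss_mgf_eq: "exp (a * x) * std_normal_density x = exp (a^2/2) * normal_density a 1 x"
proof -
  have "a*x + (-(x^2)/2) = a^2/2 + (-((x-a)^2)/2)" by (simp add: power2_eq_square field_simps)
  then show ?thesis unfolding std_normal_density_def normal_density_def
    by (simp add: exp_add[symmetric])
qed

lemma gauss_mgf:
  "integrable lborel (\<lambda>x. exp (a * x) * std_normal_density x)"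
  "(\<integral>x. exp (a * x) * std_normal_density x \<partial>lborel) = exp (a^2/2)"
  unfolding gauss_mgf_eq by simp_all

lemma gauss_quad_eq:
  assumes "\<beta> < 1"
  shows "exp (\<beta> * x^2 / 2) * std_normal_density x = (1 / sqrt (1 - \<beta>)) * normal_density 0 (1 / sqrt (1 - \<beta>)) x"
proof -
  have p: "0 < 1 - \<beta>" using assms by simp
  have e: "\<beta> * x^2 / 2 + (-(x^2)/2) = -((x - 0)^2) / (2 * (1 / sqrt (1 - \<beta>))^2)"
    using p by (simp add: power_divide field_simps)
  have "exp (\<beta> * x^2 / 2) * std_normal_density x = 1 / sqrt (2*pi) * exp (-((x - 0)^2) / (2 * (1 / sqrt (1 - \<beta>))^2))"
    unfolding std_normal_density_def e[symmetric] by (simp add: exp_add[symmetric] exp_diff)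
  also have "1 / sqrt (2*pi) = (1 / sqrt (1 - \<beta>)) * (1 / sqrt (2 * pi * (1 / sqrt (1 - \<beta>))^2))"
    using p by (simp add: power_divide real_sqrt_mult real_sqrt_divide field_simps)
  finally show ?thesis unfolding normal_density_def by simp
qed

lemma gauss_quad:
  assumes "\<beta> < 1"
  shows "integrable lborel (\<lambda>x. exp (\<beta> * x^2 / 2) * std_normal_density x)"
    "(\<integral>x. exp (\<beta> * x^2 / 2) * std_normal_density x \<partial>lborel) = 1 / sqrt (1 - \<beta>)"
  unfolding gauss_quad_eq[OF assms]
  using assms by (auto intro!: integrable_mult_right integral_normal_density)

lemma pairs_sum:
  fixes \<sigma> :: "nat \<Rightarrow> real"
  assumes "\<forall>i\<in>{1..N}. \<sigma> i \<in> {-1,1}"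
  shows "2 * (\<Sum>(i,j)\<in>{(i,j). 1 \<le> i \<and> i < j \<and> j \<le> N}. \<sigma> i * \<sigma> j) = (\<Sum>i=1..N. \<sigma> i)^2 - real N"
  using assms
proof (induction N)
  case 0
  have e: "{(i,j). 1 \<le> i \<and> i < j \<and> j \<le> (0::nat)} = {}" by auto
  show ?case by (subst e) simp
next
  case (Suc N)
  let ?P = "\<lambda>N. {(i,j). 1 \<le> i \<and> i < j \<and> j \<le> (N::nat)}"
  have fin: "finite (?P N)"
    by (rule finite_subset[of _ "{1..N} \<times> {1..N}"]) auto
  have eq: "?P (Suc N) = ?P N \<union> (\<lambda>i. (i, Suc N)) ` {1..N}" by auto
  have dis: "?P N \<inter> (\<lambda>i. (i, Suc N)) ` {1..N} = {}" by auto
  have inj: "inj_on (\<lambda>i. (i, Suc N)) {1..N}" by (auto simp: inj_on_def)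
  have "\<sigma> (Suc N) \<in> {-1,1}" using Suc.prems by auto
  then have s2: "\<sigma> (Suc N) ^ 2 = 1" by auto
  have IH: "2 * (\<Sum>(i,j)\<in>?P N. \<sigma> i * \<sigma> j) = (\<Sum>i=1..N. \<sigma> i)^2 - real N"
    using Suc by auto
  have A: "(\<Sum>(i,j)\<in>?P (Suc N). \<sigma> i * \<sigma> j) = (\<Sum>(i,j)\<in>?P N. \<sigma> i * \<sigma> j) + (\<Sum>i=1..N. \<sigma> i * \<sigma> (Suc N))"
  proof -
    have r: "(\<Sum>(i,j)\<in>(\<lambda>i. (i, Suc N)) ` {1..N}. \<sigma> i * \<sigma> j) = (\<Sum>i=1..N. \<sigma> i * \<sigma> (Suc N))"
      by (subst sum.reindex[OF inj]) simp
    show ?thesis unfolding eq by (subst sum.union_disjoint[OF fin _ dis]) (auto simp only: r)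
  qed
  have T: "(\<Sum>i=1..N. \<sigma> i * \<sigma> (Suc N)) = (\<Sum>i=1..N. \<sigma> i) * \<sigma> (Suc N)"
    by (simp add: sum_distrib_right)
  have M: "(\<Sum>i=1..Suc N. \<sigma> i) = (\<Sum>i=1..N. \<sigma> i) + \<sigma> (Suc N)"
    by simp
  have gen: "\<And>a b t m s n::real. a = b + t \<Longrightarrow> 2*b = m^2 - n \<Longrightarrow> t = m * s \<Longrightarrow> s^2 = 1 \<Longrightarrow> 2*a = (m+s)^2 - (n+1)"
    by (simp add: power2_eq_square algebra_simps)
  show ?case unfolding M using gen[OF A IH T s2] by simp
qed

lemma sum_configs:
  "(\<Sum>\<sigma>\<in>configs N. exp ((c * (\<Sum>i=1..N. \<sigma> i)) * x)) = (2 * cosh (c*x))^N"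
proof -
  have "(\<Sum>\<sigma>\<in>configs N. exp ((c * (\<Sum>i=1..N. \<sigma> i)) * x)) = (\<Sum>\<sigma>\<in>configs N. \<Prod>i\<in>{1..N}. exp (c * x * \<sigma> i))"
    by (intro sum.cong refl) (simp add: exp_sum sum_distrib_left sum_distrib_right mult_ac)
  also have "\<dots> = (\<Prod>i\<in>{1..N}. \<Sum>s\<in>{-1,1}. exp (c * x * s))"
    unfolding configs_def by (rule prod_sum_PiE[symmetric]) auto
  also have "\<dots> = (\<Prod>i\<in>{1..N}. 2 * cosh (c * x))"
  proof -
    have "(\<Sum>s\<in>{-1,1}. exp (c * x * s)) = 2 * cosh (c * x)" by (simp add: cosh_field_def)
    then show ?thesis by simp
  qed
  finally show ?thesis by simp
qed

lemma Z_repr: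
  fixes \<beta> :: real
  assumes b: "0 \<le> \<beta>" and N: "N \<ge> 1"
  shows "integrable lborel (\<lambda>x. cosh (x * sqrt (\<beta> / N)) ^ N * std_normal_density x)"
    and "cw_Z N \<beta> = exp (-\<beta>/2) * 2^N * (\<integral>x. cosh (x * sqrt (\<beta> / N)) ^ N * std_normal_density x \<partial>lborel)"
proof -
  define c where "c = sqrt (\<beta> / N)"
  have c2: "c^2 = \<beta> / N" unfolding c_def using b by simp
  define g where "g = (\<lambda>\<sigma> x. exp ((c * (\<Sum>i=1..N. \<sigma> i)) * x) * std_normal_density x)"
  have gi: "integrable lborel (g \<sigma>)" for \<sigma> unfolding g_def by (rule gauss_mgf)
  have sg: "(\<Sum>\<sigma>\<in>configs N. g \<sigma> x) = 2^N * (cosh (x * sqrt (\<beta> / N)) ^ N * std_normal_density x)" for x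
    unfolding g_def sum_distrib_right[symmetric] sum_configs c_def
    by (simp add: power_mult_distrib mult_ac)
  have si: "integrable lborel (\<lambda>x. \<Sum>\<sigma>\<in>configs N. g \<sigma> x)" using gi by auto
  then have "integrable lborel (\<lambda>x. (1/2^N) * (\<Sum>\<sigma>\<in>configs N. g \<sigma> x))" by (rule integrable_mult_right)
  then show "integrable lborel (\<lambda>x. cosh (x * sqrt (\<beta> / N)) ^ N * std_normal_density x)"
    unfolding sg by simp
  have tm: "exp (- \<beta> * cw_H N \<sigma>) = exp (-\<beta>/2) * (\<integral>x. g \<sigma> x \<partial>lborel)" if s: "\<sigma> \<in> configs N" for \<sigma>
  proof -
    have "\<forall>i\<in>{1..N}. \<sigma> i \<in> {-1,1}" using s unfolding configs_def by auto
    note ps = pairs_sum[OF this]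
    have ps': "(\<Sum>(i,j)\<in>{(i,j). 1 \<le> i \<and> i < j \<and> j \<le> N}. \<sigma> i * \<sigma> j) = ((\<Sum>i=1..N. \<sigma> i)^2 - real N) / 2"
      using ps by (simp only: eq_divide_eq) (simp add: mult.commute)
    have h: "- \<beta> * cw_H N \<sigma> = - \<beta>/2 + (c * (\<Sum>i=1..N. \<sigma> i))^2 / 2"
      unfolding cw_H_def power_mult_distrib c2 ps' using N
      by (simp add: field_simps)
    show ?thesis unfolding g_def gauss_mgf(2) by (simp only: h exp_add)
  qed
  have "cw_Z N \<beta> = (\<Sum>\<sigma>\<in>configs N. exp (-\<beta>/2) * (\<integral>x. g \<sigma> x \<partial>lborel))"
    unfolding cw_Z_def by (intro sum.cong refl tm)
  also have "\<dots> = exp (-\<beta>/2) * (\<integral>x. (\<Sum>\<sigma>\<in>configs N. g \<sigma> x) \<partial>lborel)"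
    by (simp add: sum_distrib_left[symmetric] Bochner_Integration.integral_sum[OF gi])
  also have "\<dots> = exp (-\<beta>/2) * 2^N * (\<integral>x. cosh (x * sqrt (\<beta> / N)) ^ N * std_normal_density x \<partial>lborel)"
    unfolding sg by simp
  finally show "cw_Z N \<beta> = exp (-\<beta>/2) * 2^N * (\<integral>x. cosh (x * sqrt (\<beta> / N)) ^ N * std_normal_density x \<partial>lborel)" .
qed

lemma series_eq:
  fixes \<beta> :: real assumes "0 \<le> \<beta>" "\<beta> < 1"
  shows "(\<lambda>k. \<beta> ^ (k + 2) / (2 * real (k + 2))) sums (- \<beta> / 2 - ln (sqrt (1 - \<beta>)))"
proof -
  have "(\<lambda>n. - ((-(-\<beta>))^n) / of_nat n) sums ln (1 + (-\<beta>))"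
    by (rule ln_series') (use assms in auto)
  then have s0: "(\<lambda>n. \<beta>^n / real n) sums (- ln (1 - \<beta>))"
    using sums_minus by fastforce
  have "(\<lambda>k. \<beta>^(k+2) / real (k+2)) sums (- ln (1 - \<beta>) - (\<Sum>i<2. \<beta>^i / real i))"
    apply (subst sums_iff_shift[where f = "\<lambda>n. \<beta>^n / real n" and n = 2])
    using s0 by simp
  then have "(\<lambda>k. \<beta>^(k+2) / real (k+2)) sums (- ln (1 - \<beta>) - \<beta>)"
    by (simp add: eval_nat_numeral)
  then have "(\<lambda>k. \<beta>^(k+2) / real (k+2) / 2) sums ((- ln (1 - \<beta>) - \<beta>) / 2)"
    by (rule sums_divide)
  moreover have "(- ln (1 - \<beta>) - \<beta>) / 2 = - \<beta> / 2 - ln (sqrt (1 - \<beta>))"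
    using assms by (simp add: ln_sqrt field_simps)
  ultimately show ?thesis by (simp add: field_simps)
qed

lemma Fq:
  fixes \<beta> :: real assumes "0 \<le> \<beta>" "N \<ge> 1"
  shows "cosh (x * sqrt (\<beta> / N)) ^ N = exp (qq N (x * sqrt \<beta>))"
proof -
  have "x * sqrt (\<beta> / N) = x * sqrt \<beta> / sqrt N" by (simp add: real_sqrt_divide)
  then show ?thesis unfolding qq_def by (simp add: exp_of_nat_mult)
qed

theorem proposition2p3:
  fixes \<beta> :: real
  assumes "0 \<le> \<beta>" and "\<beta> < 1"
  shows "(\<forall>N. ln (cw_Z N \<beta>) = real N * ln 2 + cw_G N \<beta>)
    \<and> (\<forall>N\<ge>1. cw_G N \<beta> \<le> cw_G (Suc N) \<beta>)
    \<and> summable (\<lambda>k. \<beta> ^ (k + 2) / (2 * real (k + 2)))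
    \<and> (\<lambda>N. cw_G N \<beta>) \<longlonglongrightarrow> (\<Sum>k. \<beta> ^ (k + 2) / (2 * real (k + 2)))
    \<and> (\<Sum>k. \<beta> ^ (k + 2) / (2 * real (k + 2))) = - \<beta> / 2 - ln (sqrt (1 - \<beta>))"
proof -
  note b = assms
  define F where "F = (\<lambda>N x. cosh (x * sqrt (\<beta> / real N)) ^ N * std_normal_density x)"
  define I where "I = (\<lambda>N. \<integral>x. F N x \<partial>lborel)"
  define w where "w = (\<lambda>x. exp (\<beta> * x^2 / 2) * std_normal_density x)"
  have Fint: "integrable lborel (F N)" for N
  proof (cases "N = 0")
    case True then show ?thesis unfolding F_def by simp
  next
    case False then show ?thesis unfolding F_def using Z_repr(1)[OF b(1), of N] by simp
  qed
  have Fge: "std_normal_density x \<le> F N x" for N x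
  proof -
    have "1 * std_normal_density x \<le> cosh (x * sqrt (\<beta> / real N)) ^ N * std_normal_density x"
      using cosh_real_ge_1 by (intro mult_right_mono one_le_power) auto
    then show ?thesis unfolding F_def by simp
  qed
  have Ige: "1 \<le> I N" for N
  proof -
    have "(\<integral>x. std_normal_density x \<partial>lborel) \<le> I N"
      unfolding I_def by (rule integral_mono[OF _ Fint Fge]) (rule integrable_normal_density, simp)
    moreover have "(\<integral>x. std_normal_density x \<partial>lborel) = 1" by (rule integral_normal_density) simp
    ultimately show ?thesis by simp
  qed
  have Grep: "cw_G N \<beta> = - \<beta> / 2 + ln (I N)" if N: "N \<ge> 1" for N
  proof -
    have "cw_Z N \<beta> = exp (-\<beta>/2) * 2^N * I N"
      unfolding I_def F_def using Z_repr(2)[OF b(1) N] .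
    moreover have "0 < I N" using Ige[of N] by linarith
    ultimately show ?thesis unfolding cw_G_def
      by (simp add: ln_mult_pos ln_realpow)
  qed
  have Fexp: "F N x = exp (qq N (x * sqrt \<beta>)) * std_normal_density x" if "N \<ge> 1" for N x
    unfolding F_def using Fq[OF b(1) that] by simp
  have P1: "\<forall>N. ln (cw_Z N \<beta>) = real N * ln 2 + cw_G N \<beta>"
    unfolding cw_G_def by simp
  have P2: "\<forall>N\<ge>1. cw_G N \<beta> \<le> cw_G (Suc N) \<beta>"
  proof (intro allI impI)
    fix N :: nat assume N: "N \<ge> 1"
    have "I N \<le> I (Suc N)"
      unfolding I_def
    proof (rule integral_mono[OF Fint Fint])
      fix x
      have N': "Suc N \<ge> 1" by simp
      show "F N x \<le> F (Suc N) x" unfolding Fexp[OF N] Fexp[OF N'] using N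
        by (intro mult_right_mono) (auto intro: qq_mono)
    qed
    moreover have "0 < I N" using Ige[of N] by linarith
    ultimately show "cw_G N \<beta> \<le> cw_G (Suc N) \<beta>"
      unfolding Grep[OF N] Grep[of "Suc N", simplified] by simp
  qed
  have S: "(\<lambda>k. \<beta> ^ (k + 2) / (2 * real (k + 2))) sums (- \<beta> / 2 - ln (sqrt (1 - \<beta>)))"
    by (rule series_eq[OF b])
  have wint: "integrable lborel w" and wI: "(\<integral>x. w x \<partial>lborel) = 1 / sqrt (1 - \<beta>)"
    unfolding w_def using gauss_quad[OF b(2)] by auto
  have Ilim: "I \<longlonglongrightarrow> 1 / sqrt (1 - \<beta>)"
    unfolding I_def wI[symmetric]
  proof (rule integral_dominated_convergence[where w = w])
    show "w \<in> borel_measurable lborel" using wint by (rule borel_measurable_integrable)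
    show "F i \<in> borel_measurable lborel" for i using Fint by (rule borel_measurable_integrable)
    show "integrable lborel w" by (rule wint)
    show "AE x in lborel. (\<lambda>i. F i x) \<longlonglongrightarrow> w x"
    proof (rule AE_I2)
      fix x
      have "(\<lambda>i. exp (qq i (x * sqrt \<beta>)) * std_normal_density x) \<longlonglongrightarrow> exp ((x * sqrt \<beta>)^2 / 2) * std_normal_density x"
        by (intro tendsto_intros qq_lim)
      moreover have "(x * sqrt \<beta>)^2 / 2 = \<beta> * x^2 / 2" using b by (simp add: power_mult_distrib)
      moreover have "eventually (\<lambda>i. exp (qq i (x * sqrt \<beta>)) * std_normal_density x = F i x) sequentially"
        using eventually_ge_at_top[of 1] by eventually_elim (simp add: Fexp)
      ultimately show "(\<lambda>i. F i x) \<longlonglongrightarrow> w x"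
        unfolding w_def using Lim_transform_eventually by fastforce
    qed
    show "AE x in lborel. norm (F i x) \<le> w x" for i
    proof (rule AE_I2)
      fix x
      have F0: "0 \<le> F i x" unfolding F_def by simp
      have "F i x \<le> w x"
      proof (cases "i = 0")
        case True
        have "1 * std_normal_density x \<le> exp (\<beta> * x^2 / 2) * std_normal_density x"
          using b by (intro mult_right_mono) auto
        then show ?thesis unfolding F_def w_def using True by simp
      next
        case False
        then have i: "i \<ge> 1" by simp
        have "qq i (x * sqrt \<beta>) \<le> (x * sqrt \<beta>)^2 / 2" by (rule qq_le[OF i])
        also have "\<dots> = \<beta> * x^2 / 2" using b by (simp add: power_mult_distrib)
        finally show ?thesis unfolding Fexp[OF i] w_def
          by (intro mult_right_mono) auto
      qed
      then show "norm (F i x) \<le> w x" using F0 by simp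
    qed
  qed
  have "(\<lambda>N. - \<beta> / 2 + ln (I N)) \<longlonglongrightarrow> - \<beta> / 2 + ln (1 / sqrt (1 - \<beta>))"
    using b by (intro tendsto_intros Ilim) auto
  moreover have "- \<beta> / 2 + ln (1 / sqrt (1 - \<beta>)) = - \<beta> / 2 - ln (sqrt (1 - \<beta>))"
    using b by (simp add: ln_div)
  moreover have "eventually (\<lambda>N. - \<beta> / 2 + ln (I N) = cw_G N \<beta>) sequentially"
    using eventually_ge_at_top[of 1] by eventually_elim (simp add: Grep)
  ultimately have L: "(\<lambda>N. cw_G N \<beta>) \<longlonglongrightarrow> - \<beta> / 2 - ln (sqrt (1 - \<beta>))"
    using Lim_transform_eventually by fastforce
  show ?thesis using P1 P2 S L sums_summable[OF S] sums_unique[OF S] by simp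
qed

end
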